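(* Let $w=\mathcal C_n(v_0,\dots,v_{k_n-1})$ and $w'=\mathcal C_n(v'_0,\dots,v'_{k_n-1})$ be in $\mathcal W^c_{n+1}$, with $w$ sitting on $[0,q_{n+1})$ and $\mathrm{rev}(w')$ placed on $[j_1,q_{n+1}+j_1)$, where $j_1\in[0,q_n)$, $j_1\equiv p_n^{-1}\pmod{q_n}$. Then: (1) each occurrence of an $n$-subword $v_i$ of $w$ (a copy of $v_i$ in a power $v_i^{l_n-1}$) is either lined up with an occurrence of $\mathrm{rev}(v'_{k_n-i-1})$ in the placed $\mathrm{rev}(w')$, or lies entirely opposite positions of the boundary of the placed $\mathrm{rev}(w')$ (positions not belonging to any of its reversed $n$-subwords); (2) there is a number $C$ such that for every $i<k_n$, the number of occurrences of $v_i$ in $w$ lined up with an occurrence of $\mathrm{rev}(v'_{k_n-i-1})$ is exactly $C$.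
   Context: Circular coefficients $\langle k_n,l_n\rangle$: $k_n\ge2$, $l_n\ge2$, $p_0=0,q_0=1$, $q_{n+1}=k_nl_nq_n^2$, $p_{n+1}=p_nq_nk_nl_n+1$. $\mathcal C_n(w_0,\dots,w_{k_n-1})=\prod_{i=0}^{q_n-1}\prod_{j=0}^{k_n-1}(b^{q_n-j_i}w_j^{l_n-1}e^{j_i})$ (concatenation) with $j_i\in[0,q_n)$, $j_i\equiv p_n^{-1}i\pmod{q_n}$ ($j_i=0$ if $q_n=1$). $\mathcal W^c_n$ is a set of words of length $q_n$ over $\Sigma\cup\{b,e\}$ and $\mathcal W^c_{n+1}$ consists of words $\mathcal C_n(w_0,\dots,w_{k_n-1})$, $w_j\in\mathcal W^c_n$. $\mathrm{rev}(w)$ is $w$ written backwards; the boundary of $\mathcal C_n(\dots)$ consists of the letters in the displayed blocks $b^{q_n-j_i}$, $e^{j_i}$. *)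

theory Defs
  imports "HOL-Number_Theory.Cong"
begin

datatype 'a letter = Sym 'a | Bl | El

fun qq :: "(nat \<Rightarrow> nat) \<Rightarrow> (nat \<Rightarrow> nat) \<Rightarrow> nat \<Rightarrow> nat" where
  "qq k l 0 = 1"
| "qq k l (Suc n) = k n * l n * (qq k l n)^2"

fun pp :: "(nat \<Rightarrow> nat) \<Rightarrow> (nat \<Rightarrow> nat) \<Rightarrow> nat \<Rightarrow> nat" where
  "pp k l 0 = 0"
| "pp k l (Suc n) = pp k l n * qq k l n * k n * l n + 1"

definition jidx :: "(nat \<Rightarrow> nat) \<Rightarrow> (nat \<Rightarrow> nat) \<Rightarrow> nat \<Rightarrow> nat \<Rightarrow> nat" where
  "jidx k l n i = (THE j. j < qq k l n \<and> [pp k l n * j = i] (mod qq k l n))"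

definition cblock :: "(nat \<Rightarrow> nat) \<Rightarrow> (nat \<Rightarrow> nat) \<Rightarrow> nat \<Rightarrow> (nat \<Rightarrow> 'a letter list) \<Rightarrow> nat \<Rightarrow> nat \<Rightarrow> 'a letter list" where
  "cblock k l n w i j =
     replicate (qq k l n - jidx k l n i) Bl @ concat (replicate (l n - 1) (w j)) @ replicate (jidx k l n i) El"

definition Cop :: "(nat \<Rightarrow> nat) \<Rightarrow> (nat \<Rightarrow> nat) \<Rightarrow> nat \<Rightarrow> (nat \<Rightarrow> 'a letter list) \<Rightarrow> 'a letter list" where
  "Cop k l n w = concat (map (\<lambda>i. concat (map (\<lambda>j. cblock k l n w i j) [0..<k n])) [0..<qq k l n])"

fun Wc :: "(nat \<Rightarrow> nat) \<Rightarrow> (nat \<Rightarrow> nat) \<Rightarrow> 'a letter list set \<Rightarrow> nat \<Rightarrow> 'a letter list set" where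
  "Wc k l W0 0 = W0"
| "Wc k l W0 (Suc n) = {Cop k l n w | w. \<forall>j<k n. w j \<in> Wc k l W0 n}"

text \<open>Start position (in C_n(w_0,...) sitting on [0,q_{n+1})) of the t-th copy (t < l_n - 1)
  of w_j inside the block with outer index i (i < q_n). Each block has length l_n q_n.\<close>
definition occ_start :: "(nat \<Rightarrow> nat) \<Rightarrow> (nat \<Rightarrow> nat) \<Rightarrow> nat \<Rightarrow> nat \<Rightarrow> nat \<Rightarrow> nat \<Rightarrow> nat" where
  "occ_start k l n j i t =
     (i * k n + j) * (l n * qq k l n) + (qq k l n - jidx k l n i) + t * qq k l n"

definition occs :: "(nat \<Rightarrow> nat) \<Rightarrow> (nat \<Rightarrow> nat) \<Rightarrow> nat \<Rightarrow> nat \<Rightarrow> nat set" where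
  "occs k l n j = {occ_start k l n j i t | i t. i < qq k l n \<and> t < l n - 1}"

text \<open>Start positions of the occurrences of rev(w'_j) in rev(C_n(w'_0,...)) placed on
  [d, q_{n+1} + d): an occurrence of w'_j at [s, s+q_n) in w' becomes an occurrence of
  rev(w'_j) at [q_{n+1} - s - q_n, q_{n+1} - s) in rev(w'), shifted by d.\<close>
definition rev_occs :: "(nat \<Rightarrow> nat) \<Rightarrow> (nat \<Rightarrow> nat) \<Rightarrow> nat \<Rightarrow> nat \<Rightarrow> nat \<Rightarrow> nat set" where
  "rev_occs k l n d j = {d + qq k l (Suc n) - s - qq k l n | s. s \<in> occs k l n j}"

definition rev_boundary :: "(nat \<Rightarrow> nat) \<Rightarrow> (nat \<Rightarrow> nat) \<Rightarrow> nat \<Rightarrow> nat \<Rightarrow> nat set" where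
  "rev_boundary k l n d = {x. d \<le> x \<and> x < qq k l (Suc n) + d \<and>
      (\<forall>j<k n. \<forall>r\<in>rev_occs k l n d j. \<not> (r \<le> x \<and> x < r + qq k l n))}"

end

theory Submission
  imports Defs
begin


lemma coprime_pq: "coprime (pp k l n) (qq k l n)"
proof (induction n)
  case 0 then show ?case by simp
next
  case (Suc n)
  define a where "a = pp k l n * qq k l n * k n * l n"
  have "coprime (a+1) a" by simp
  hence c: "coprime (a+1) (a^2)" by simp
  have "a^2 = (k n * l n * (qq k l n)^2) * ((pp k l n)^2 * k n * l n)"
    unfolding a_def by (simp add: power2_eq_square ac_simps)
  hence "k n * l n * (qq k l n)^2 dvd a^2" by (rule dvdI)
  then have "coprime (a+1) (k n * l n * (qq k l n)^2)" using coprime_divisors[OF dvd_refl _ c] by blast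
  then show ?case by (simp only: pp.simps qq.simps a_def)
qed

lemma qq_pos: assumes "\<forall>m. k m \<ge> 2" "\<forall>m. l m \<ge> 2" shows "qq k l n \<ge> 1"
proof (induction n)
  case 0 then show ?case by simp
next
  case (Suc n)
  have "k n \<ge> 1" "l n \<ge> 1" using assms by (metis one_le_numeral order_trans)+
  then show ?case using Suc by (simp add: one_le_mult_iff)
qed

lemma jidx_formula:
  assumes Q: "qq k l n \<ge> 1"
  shows "jidx k l n i = (i * jidx k l n 1) mod qq k l n"
proof -
  let ?Q = "qq k l n" and ?p = "pp k l n"
  have cp: "coprime ?p ?Q" by (rule coprime_pq)
  obtain d0 where d0: "[?p * d0 = Suc 0] (mod ?Q)" using cong_solve_coprime_nat[OF cp] by blast
  have uniq: "jidx k l n x = (x * d0) mod ?Q" for x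
  proof -
    have P: "(x*d0) mod ?Q < ?Q \<and> [?p * ((x*d0) mod ?Q) = x] (mod ?Q)"
    proof
      show "(x*d0) mod ?Q < ?Q" using Q by simp
      have "[?p * ((x*d0) mod ?Q) = ?p * (x * d0)] (mod ?Q)"
        by (simp add: cong_def mod_mult_right_eq)
      also have "[?p * (x * d0) = x * (?p * d0)] (mod ?Q)" by (simp add: ac_simps)
      also have "[x * (?p * d0) = x * Suc 0] (mod ?Q)" using d0 by (rule cong_scalar_left)
      finally show "[?p * ((x*d0) mod ?Q) = x] (mod ?Q)" by simp
    qed
    have U: "\<And>y. y < ?Q \<and> [?p * y = x] (mod ?Q) \<Longrightarrow> y = (x*d0) mod ?Q"
    proof -
      fix y assume y: "y < ?Q \<and> [?p * y = x] (mod ?Q)"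
      have "[?p * y = ?p * ((x*d0) mod ?Q)] (mod ?Q)"
        using y P by (meson cong_sym cong_trans)
      hence "[y = (x*d0) mod ?Q] (mod ?Q)" using cong_mult_lcancel_nat[OF cp] by blast
      thus "y = (x*d0) mod ?Q" using y P cong_less_modulus_unique_nat by blast
    qed
    show ?thesis unfolding jidx_def by (rule the_equality, rule P, erule U)
  qed
  have a: "jidx k l n i = i * d0 mod ?Q" by (rule uniq)
  have b: "jidx k l n 1 = 1 * d0 mod ?Q" by (rule uniq)
  show ?thesis unfolding a b by (simp add: mod_mult_right_eq)
qed



lemma blk_eq:
  fixes a b B B' T :: nat
  assumes "a < T" "b < T"
  shows "B*T + a = B'*T + b \<longleftrightarrow> B = B' \<and> a = b"
proof
  assume h: "B*T + a = B'*T + b"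
  have T0: "T > 0" using assms by simp
  have "(B*T + a) div T = B" using assms T0 by simp
  moreover have "(B'*T + b) div T = B'" using assms T0 by simp
  ultimately have "B = B'" using h by simp
  then show "B = B' \<and> a = b" using h by simp
qed simp

lemma blk_le1: "B1 + 1 \<le> B2 \<Longrightarrow> B1*T + T \<le> B2*(T::nat)"
proof -
  assume "B1 + 1 \<le> B2"
  hence "(B1+1)*T \<le> B2*T" by (rule mult_le_mono1)
  thus ?thesis by simp
qed

lemma blk_le2: "B1 + 2 \<le> B2 \<Longrightarrow> B1*T + 2*T \<le> B2*(T::nat)"
proof -
  assume "B1 + 2 \<le> B2"
  hence "(B1+2)*T \<le> B2*T" by (rule mult_le_mono1)
  thus ?thesis by (simp add: algebra_simps)
qed

lemma dist3: "(a+b+1)*(T::nat) = a*T + b*T + T" by (simp add: algebra_simps)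
lemma dist3': "(a+b+2)*(Q::nat) = a*Q + b*Q + 2*Q" by (simp add: algebra_simps)

lemma arithA:
  fixes X Y T QKT A tq J d Q :: nat
  shows "X + Y + T = QKT \<Longrightarrow> T = A + tq + 2*Q \<Longrightarrow> J < Q \<Longrightarrow>
    d + QKT - (X + (Q - J) + tq) - Q = Y + (A + J + d)"
  by arith

lemma alignH:
  fixes t u c E Ji Q :: nat
  assumes "1 + t = u + c" "E + Ji = c*Q" "Ji < Q"
  shows "(Q - Ji) + t*Q = u*Q + E"
proof -
  have "(1+t)*Q = (u+c)*Q" using assms(1) by simp
  hence "Q + t*Q = u*Q + c*Q" by (simp add: algebra_simps)
  thus ?thesis using assms(2,3) by linarith
qed

lemma modl1: "((a::nat) mod q + d + b mod q) mod q = (a + b + d) mod q"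
  by (metis add.commute mod_add_left_eq mod_add_right_eq add.assoc)
lemma modl2: "((a::nat) mod q + b mod q) mod q = (a + b) mod q"
  by (simp add: mod_add_eq)

lemma core:
  fixes Q K L d :: nat and J :: "nat \<Rightarrow> nat" and OC RO :: "nat \<Rightarrow> nat set" and BD :: "nat set"
  assumes Q1: "Q \<ge> 1" and K2: "K \<ge> 2" and L2: "L \<ge> 2" and dQ: "d < Q"
    and Jlt: "\<And>i. J i < Q" and J0: "J 0 = 0"
    and Jsum: "\<And>i. i < Q \<Longrightarrow> (J (Q-1-i) + d + J i) mod Q = 0"
    and Jpair: "\<And>i. 1 \<le> i \<Longrightarrow> i < Q \<Longrightarrow> (J (Q-i) + J i) mod Q = 0"
    and OC: "\<And>j. OC j = {(i*K+j)*(L*Q) + (Q - J i) + t*Q | i t. i < Q \<and> t < L - 1}"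
    and RO: "\<And>j. RO j = {d + K*L*Q^2 - s - Q | s. s \<in> OC j}"
    and BD: "BD = {x. d \<le> x \<and> x < K*L*Q^2 + d \<and> (\<forall>j<K. \<forall>r\<in>RO j. \<not> (r \<le> x \<and> x < r + Q))}"
  shows "(\<forall>i<K. \<forall>s\<in>OC i. s \<in> RO (K-i-1) \<or> {s..<s+Q} \<subseteq> BD)
       \<and> (\<exists>C. \<forall>i<K. card {s\<in>OC i. s \<in> RO (K-i-1)} = C)"
proof -
  define T where "T = L*Q"
  have T2: "2*Q \<le> T" unfolding T_def using L2 by (metis mult_le_mono1)
  have QN: "K*L*Q^2 = (Q*K)*T" by (simp add: T_def power2_eq_square ac_simps)
  have OC': "\<And>j. OC j = {(i*K+j)*T + (Q - J i) + t*Q | i t. i < Q \<and> t < L - 1}"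
    using OC T_def by simp
  have offs: "t*Q + 2*Q \<le> T" if "t < L-1" for t
  proof -
    have "t + 2 \<le> L" using that by arith
    hence "(t+2)*Q \<le> L*Q" by (rule mult_le_mono1)
    thus ?thesis by (simp add: T_def algebra_simps)
  qed
  have Tsplit: "T = (L-2-t')*Q + t'*Q + 2*Q" if "t' < L-1" for t'
  proof -
    have Leq: "L = (L-2-t') + t' + 2" using that by arith
    have "T = ((L-2-t') + t' + 2)*Q" using arg_cong[OF Leq, of "\<lambda>x. x*Q"] by (simp only: T_def)
    also have "\<dots> = (L-2-t')*Q + t'*Q + 2*Q" by (rule dist3')
    finally show ?thesis .
  qed
  have offr: "(L-2-t')*Q + J i' + d < T" if "t' < L-1" for t' i'
    using Tsplit[OF that] Jlt[of i'] dQ by linarith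
  have A: "d + K*L*Q^2 - ((i'*K+j')*T + (Q - J i') + t'*Q) - Q
      = ((Q-1-i')*K + (K-1-j'))*T + ((L-2-t')*Q + J i' + d)"
    if "i' < Q" "j' < K" "t' < L-1" for i' j' t'
  proof -
    obtain m where m: "m = Q-1-i'" by simp
    have Qm: "Q = i' + m + 1" using m that by arith
    have "Q*K = i'*K + m*K + K" unfolding Qm by (simp add: algebra_simps)
    hence e1: "(i'*K+j') + ((Q-1-i')*K + (K-1-j')) + 1 = Q*K" using m that by simp
    have e2: "(i'*K+j')*T + ((Q-1-i')*K + (K-1-j'))*T + T = Q*K*T"
    proof -
      have "(i'*K+j')*T + ((Q-1-i')*K + (K-1-j'))*T + T
          = ((i'*K+j') + ((Q-1-i')*K + (K-1-j')) + 1)*T" by (rule dist3[symmetric])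
      also have "\<dots> = Q*K*T" by (simp only: e1)
      finally show ?thesis .
    qed
    show ?thesis unfolding QN
      by (rule arithA[OF e2 Tsplit[OF that(3)] Jlt])
  qed
  have R: "r \<in> RO j' \<longleftrightarrow> (\<exists>i'<Q. \<exists>t'<L-1. r = ((Q-1-i')*K + (K-1-j'))*T + ((L-2-t')*Q + J i' + d))"
    if "j' < K" for j' r
  proof
    assume "r \<in> RO j'"
    then obtain s where s: "r = d + K*L*Q^2 - s - Q" "s \<in> OC j'" using RO by blast
    then obtain i' t' where it: "s = (i'*K+j')*T + (Q - J i') + t'*Q" "i' < Q" "t' < L-1"
      using OC' by blast
    show "\<exists>i'<Q. \<exists>t'<L-1. r = ((Q-1-i')*K + (K-1-j'))*T + ((L-2-t')*Q + J i' + d)"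
      using A[OF it(2) that it(3)] s(1) it by blast
  next
    assume "\<exists>i'<Q. \<exists>t'<L-1. r = ((Q-1-i')*K + (K-1-j'))*T + ((L-2-t')*Q + J i' + d)"
    then obtain i' t' where it: "i' < Q" "t' < L-1"
      "r = ((Q-1-i')*K + (K-1-j'))*T + ((L-2-t')*Q + J i' + d)" by blast
    have "(i'*K+j')*T + (Q - J i') + t'*Q \<in> OC j'" using OC' it by blast
    moreover have "r = d + K*L*Q^2 - ((i'*K+j')*T + (Q - J i') + t'*Q) - Q"
      using A[OF it(1) that it(2)] it(3) by simp
    ultimately show "r \<in> RO j'" using RO by blast
  qed

  have Kpos: "K > 0" using K2 by simp
  have Qpos: "Q > 0" using Q1 by simp
  have offlt: "(Q - J i) + t*Q < T" if "t < L-1" for i t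
    using offs[OF that] Qpos by linarith
  define P where "P i t \<longleftrightarrow> (\<exists>t'<L-1. (Q - J i) + t*Q = (L-2-t')*Q + J (Q-1-i) + d)" for i t
  have memR: "(i*K+j)*T + (Q - J i) + t*Q \<in> RO (K-j-1) \<longleftrightarrow> P i t"
    if "i < Q" "j < K" "t < L-1" for i j t
  proof
    assume "(i*K+j)*T + (Q - J i) + t*Q \<in> RO (K-j-1)"
    moreover have kk: "K-j-1 < K" using that by arith
    ultimately obtain i' t' where it: "i' < Q" "t' < L-1"
      "(i*K+j)*T + (Q - J i) + t*Q = ((Q-1-i')*K + (K-1-(K-j-1)))*T + ((L-2-t')*Q + J i' + d)"
      using R[OF kk] by blast
    have kj: "K-1-(K-j-1) = j" using that by arith
    have "(i*K+j)*T + ((Q - J i) + t*Q) = ((Q-1-i')*K + j)*T + ((L-2-t')*Q + J i' + d)"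
      using it(3) kj by simp
    hence eq: "i*K+j = (Q-1-i')*K + j" "(Q - J i) + t*Q = (L-2-t')*Q + J i' + d"
      using blk_eq[OF offlt[OF that(3)] offr[OF it(2)]] by blast+
    hence "i = Q-1-i'" using Kpos by simp
    hence "i' = Q-1-i" using it(1) by arith
    thus "P i t" unfolding P_def using eq(2) it(2) by auto
  next
    assume "P i t"
    then obtain t' where t': "t' < L-1" "(Q - J i) + t*Q = (L-2-t')*Q + J (Q-1-i) + d"
      unfolding P_def by blast
    have kj: "K-1-(K-j-1) = j" using that by arith
    have qi: "Q-1-(Q-1-i) = i" using that by arith
    have "(i*K+j)*T + (Q - J i) + t*Q = ((Q-1-(Q-1-i))*K + (K-1-(K-j-1)))*T + ((L-2-t')*Q + J (Q-1-i) + d)"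
      using t'(2) kj qi by simp
    moreover have "Q-1-i < Q" using that by arith
    moreover have kk: "K-j-1 < K" using that by arith
    ultimately show "(i*K+j)*T + (Q - J i) + t*Q \<in> RO (K-j-1)"
      using R[OF kk] t'(1) by blast
  qed
  define S where "S = {(i,t). i < Q \<and> t < L-1 \<and> P i t}"
  have part2: "card {s\<in>OC j. s \<in> RO (K-j-1)} = card S" if "j < K" for j
  proof -
    define f where "f = (\<lambda>(i,t). (i*K+j)*T + (Q - J i) + t*Q)"
    have "{s\<in>OC j. s \<in> RO (K-j-1)} = f ` S"
    proof
      show "{s\<in>OC j. s \<in> RO (K-j-1)} \<subseteq> f ` S"
      proof
        fix s assume s: "s \<in> {s\<in>OC j. s \<in> RO (K-j-1)}"
        then obtain i t where it: "s = (i*K+j)*T + (Q - J i) + t*Q" "i < Q" "t < L-1"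
          using OC' by blast
        hence "P i t" using memR[OF it(2) that it(3)] s by simp
        thus "s \<in> f ` S" unfolding S_def f_def using it by force
      qed
      show "f ` S \<subseteq> {s\<in>OC j. s \<in> RO (K-j-1)}"
      proof
        fix s assume "s \<in> f ` S"
        then obtain i t where it: "s = (i*K+j)*T + (Q - J i) + t*Q" "i < Q" "t < L-1" "P i t"
          unfolding S_def f_def by auto
        show "s \<in> {s\<in>OC j. s \<in> RO (K-j-1)}"
          using memR[OF it(2) that it(3)] it OC' by blast
      qed
    qed
    moreover have "inj_on f S"
    proof (rule inj_onI)
      fix x y assume x: "x \<in> S" and y: "y \<in> S" and fxy: "f x = f y"
      obtain i t where xi: "x = (i,t)" "i < Q" "t < L-1" using x S_def by auto
      obtain i2 t2 where yi: "y = (i2,t2)" "i2 < Q" "t2 < L-1" using y S_def by auto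
      have "(i*K+j)*T + ((Q - J i) + t*Q) = (i2*K+j)*T + ((Q - J i2) + t2*Q)"
        using fxy xi yi unfolding f_def by (simp add: add.assoc)
      hence e: "i*K+j = i2*K+j" "(Q - J i) + t*Q = (Q - J i2) + t2*Q"
        using blk_eq[OF offlt[OF xi(3)] offlt[OF yi(3)]] by blast+
      hence "i = i2" using Kpos by simp
      hence "t*Q = t2*Q" using e(2) by simp
      hence "t = t2" using Qpos by simp
      thus "x = y" using xi yi \<open>i = i2\<close> by simp
    qed
    ultimately show ?thesis by (simp add: card_image)
  qed
  have part1: "s \<in> RO (K-j-1) \<or> {s..<s+Q} \<subseteq> BD" if j: "j < K" and sO: "s \<in> OC j" for j s
  proof -
    obtain i t where it: "s = (i*K+j)*T + (Q - J i) + t*Q" "i < Q" "t < L-1"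
      using OC' sO by blast
    define E where "E = J (Q-1-i) + d"
    have "(E + J i) mod Q = 0" using Jsum[OF it(2)] by (simp add: E_def)
    then obtain c where c: "E + J i = c*Q" by (metis mod_eq_0_iff_dvd dvd_def mult.commute)
    have "c*Q < 3*Q" using c Jlt[of i] Jlt[of "Q-1-i"] dQ unfolding E_def by linarith
    hence c3: "c < 3" by simp
    show ?thesis
    proof (cases "P i t")
      case True
      then show ?thesis using memR[OF it(2) j it(3)] it(1) by simp
    next
      case False
      have Pint: "P i t \<longleftrightarrow> (\<exists>t'<L-1. (Q - J i) + t*Q = (L-2-t')*Q + E)"
        unfolding P_def E_def by (simp add: add.assoc)
      have cases: "(c = 0 \<and> t = L-2) \<or> (c = 2 \<and> t = 0)"
      proof (rule ccontr)
        assume nc: "\<not> ((c = 0 \<and> t = L-2) \<or> (c = 2 \<and> t = 0))"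
        have "c = 0 \<or> c = 1 \<or> c = 2" using c3 by arith
        then obtain t' where t': "t' < L-1" "1 + t = (L-2-t') + c"
        proof (elim disjE)
          assume c0: "c = 0"
          hence "t \<noteq> L-2" using nc by simp
          hence "L-3-t < L-1" "1 + t = (L-2-(L-3-t)) + c" using c0 it(3) L2 by arith+
          thus ?thesis by (rule that)
        next
          assume c0: "c = 1"
          have "L-2-t < L-1" "1 + t = (L-2-(L-2-t)) + c" using c0 it(3) L2 by arith+
          thus ?thesis by (rule that)
        next
          assume c0: "c = 2"
          hence "t \<noteq> 0" using nc by simp
          hence "L-1-t < L-1" "1 + t = (L-2-(L-1-t)) + c" using c0 it(3) L2 by arith+
          thus ?thesis by (rule that)
        qed
        have "(Q - J i) + t*Q = (L-2-t')*Q + E" by (rule alignH[OF t'(2) c Jlt])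
        hence "P i t" using Pint t'(1) by blast
        thus False using False by simp
      qed
      let ?B = "i*K+j"
      have sQ: "s + Q \<le> ?B*T + T" using it offs[OF it(3)] by linarith
      have BQK: "?B + 1 \<le> Q*K"
      proof -
        have "?B + 1 \<le> (i+1)*K" using j by simp
        also have "\<dots> \<le> Q*K" using it(2) by (intro mult_le_mono1) simp
        finally show ?thesis .
      qed
      have sgeQ: "Q \<le> s"
      proof (cases "i = 0")
        case True thus ?thesis using it J0 by simp
      next
        case False
        hence "1 \<le> ?B" using Kpos by (simp add: Suc_le_eq)
        hence "1*T \<le> ?B*T" by (rule mult_le_mono1)
        thus ?thesis using it T2 by linarith
      qed
      show ?thesis
      proof (rule disjI2, rule subsetI)
        fix x assume x: "x \<in> {s..<s+Q}"
        have x1: "d \<le> x" using x sgeQ dQ by simp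
        have "?B*T + T \<le> (Q*K)*T" using blk_le1[OF BQK] by simp
        moreover have "x < s + Q" using x by simp
        ultimately have x2: "x < K*L*Q^2 + d" unfolding QN using sQ by linarith
        have x3: "\<not> (r \<le> x \<and> x < r + Q)" if j': "j' < K" and r: "r \<in> RO j'" for j' r
        proof -
          obtain i' t' where it': "i' < Q" "t' < L-1"
            "r = ((Q-1-i')*K + (K-1-j'))*T + ((L-2-t')*Q + J i' + d)"
            using R[OF j'] r by blast
          let ?B2 = "(Q-1-i')*K + (K-1-j')"
          have o: "(L-2-t')*Q + J i' + d < T" by (rule offr[OF it'(2)])
          consider "?B + 1 \<le> ?B2" | "?B2 + 2 \<le> ?B" | "?B2 + 1 = ?B" | "?B2 = ?B" by arith
          then show ?thesis
          proof cases
            case 1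
            then show ?thesis using blk_le1[OF 1, of T] it'(3) x sQ by simp
          next
            case 2
            then show ?thesis using blk_le2[OF 2, of T] it'(3) x it(1) o T2 by simp
          next
            case 3
            have key: "J i' + d + J i \<le> 2*Q"
            proof (cases "c = 0")
              case True
              hence "J i = 0" using c by simp
              thus ?thesis using Jlt[of i'] dQ by simp
            next
              case False
              hence c2: "c = 2" using cases by simp
              show ?thesis
              proof (cases "j = 0")
                case False
                have "?B2 = i*K + (j - 1)" using 3 False by simp
                hence "(Q-1-i')*K + (K-1-j') = i*K + (j-1)" by simp
                hence "Q-1-i' = i" using blk_eq[of "K-1-j'" K "j-1" "Q-1-i'" i] j j' by simp
                hence "i' = Q-1-i" using it'(1) by arith
                thus ?thesis using c c2 E_def by simp
              next
                case True
                have i1: "1 \<le> i" using 3 True by (cases i) auto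
                have "i*K = (i-1)*K + K" using i1 by (cases i) auto
                hence "(Q-1-i')*K + (K-1-j') = (i-1)*K + (K-1)" using 3 True j' Kpos by simp
                hence "Q-1-i' = i-1" using blk_eq[of "K-1-j'" K "K-1" "Q-1-i'" "i-1"] j' Kpos by simp
                hence ii: "i' = Q-i" using it'(1) i1 it(2) by arith
                have m0: "(J (Q-i) + J i) mod Q = 0" using Jpair[OF i1 it(2)] .
                have "J (Q-i) + J i < 2*Q" using Jlt[of i] Jlt[of "Q-i"] by simp
                hence "J (Q-i) + J i \<le> Q"
                proof -
                  obtain m where "J (Q-i) + J i = Q*m" using m0 by (metis mod_eq_0_iff_dvd dvd_def)
                  moreover have "Q*m < Q*2" using \<open>J (Q-i) + J i < 2*Q\<close> calculation by simp
                  ultimately show ?thesis by (cases m) auto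
                qed
                thus ?thesis using ii dQ by simp
              qed
            qed
            have "?B2*T + T = ?B*T" using blk_le1[of ?B2 ?B T] 3
              by (metis add_mult_distrib mult_1)
            hence "r + Q \<le> s" using it'(3) it(1) Tsplit[OF it'(2)] key by linarith
            then show ?thesis using x by simp
          next
            case 4
            hence "Q-1-i' = i" using blk_eq[of "K-1-j'" K j "Q-1-i'" i] j j' Kpos by simp
            hence ii: "i' = Q-1-i" using it'(1) by arith
            hence rr: "r = ?B*T + ((L-2-t')*Q + E)" using it'(3) 4 E_def by simp
            show ?thesis
            proof (cases "c = 0")
              case True
              hence tt: "t = L-2" "J i = 0" "E = 0" using cases c by auto
              have "(L-2-t')*Q \<le> (L-2)*Q" by (intro mult_le_mono1) simp
              hence "r + Q \<le> s" using rr it(1) tt by simp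
              then show ?thesis using x by simp
            next
              case False
              hence tt: "t = 0" "c = 2" using cases by auto
              have "s + Q \<le> r" using rr it(1) tt c Jlt[of i] by simp
              then show ?thesis using x by simp
            qed
          qed
        qed
        show "x \<in> BD" unfolding BD using x1 x2 x3 by blast
      qed
    qed
  qed
  show ?thesis
  proof
    show "\<forall>i<K. \<forall>s\<in>OC i. s \<in> RO (K-i-1) \<or> {s..<s+Q} \<subseteq> BD"
    proof (intro allI impI ballI)
      fix i s assume "i < K" "s \<in> OC i"
      then show "s \<in> RO (K-i-1) \<or> {s..<s+Q} \<subseteq> BD" by (rule part1)
    qed
    show "\<exists>C. \<forall>i<K. card {s\<in>OC i. s \<in> RO (K-i-1)} = C"
    proof (rule exI[of _ "card S"], intro allI impI)
      fix i assume "i < K"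
      then show "card {s\<in>OC i. s \<in> RO (K-i-1)} = card S" by (rule part2)
    qed
  qed
qed



theorem mainTheorem8:
  fixes k l :: "nat \<Rightarrow> nat" and W0 :: "'a letter list set" and n :: nat
    and v v' :: "nat \<Rightarrow> 'a letter list" and w w' :: "'a letter list"
  assumes k2: "\<forall>m. k m \<ge> 2" and l2: "\<forall>m. l m \<ge> 2"
    and W0_len: "\<forall>x\<in>W0. length x = 1"
    and v: "\<forall>j<k n. v j \<in> Wc k l W0 n" and v': "\<forall>j<k n. v' j \<in> Wc k l W0 n"
    and w: "w = Cop k l n v" and w': "w' = Cop k l n v'"
  shows "(\<forall>i<k n. \<forall>s\<in>occs k l n i.
            s \<in> rev_occs k l n (jidx k l n 1) (k n - i - 1)
          \<or> {s..<s + qq k l n} \<subseteq> rev_boundary k l n (jidx k l n 1))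
       \<and> (\<exists>C. \<forall>i<k n.
            card {s \<in> occs k l n i. s \<in> rev_occs k l n (jidx k l n 1) (k n - i - 1)} = C)"
proof -
  have Q1: "qq k l n \<ge> 1" using qq_pos[OF k2 l2] .
  have JF: "\<And>i. jidx k l n i = (i * jidx k l n 1) mod qq k l n" using jidx_formula[OF Q1] .
  have Qpos: "qq k l n > 0" using Q1 by simp
  have Jlt: "jidx k l n i < qq k l n" for i
  proof -
    have e: "jidx k l n i = i * jidx k l n 1 mod qq k l n" by (rule JF)
    show ?thesis unfolding e using Qpos by simp
  qed
  have dQ: "jidx k l n 1 < qq k l n" using Jlt by simp
  have J0: "jidx k l n 0 = 0"
  proof -
    have e: "jidx k l n 0 = 0 * jidx k l n 1 mod qq k l n" by (rule JF)
    show ?thesis unfolding e by simp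
  qed
  have Jsum: "(jidx k l n (qq k l n - 1 - i) + jidx k l n 1 + jidx k l n i) mod qq k l n = 0"
    if "i < qq k l n" for i
  proof -
    let ?Q = "qq k l n" and ?d = "jidx k l n 1"
    have a: "jidx k l n (?Q-1-i) = (?Q-1-i)*?d mod ?Q" by (rule JF)
    have b: "jidx k l n i = i*?d mod ?Q" by (rule JF)
    have h: "(?Q-1-i) + i + 1 = ?Q" using that by arith
    have "?Q*?d = ((?Q-1-i) + i + 1)*?d" by (simp only: h)
    also have "\<dots> = (?Q-1-i)*?d + i*?d + ?d" by (rule dist3)
    finally have c: "?Q*?d = (?Q-1-i)*?d + i*?d + ?d" .
    have "(jidx k l n (?Q - 1 - i) + ?d + jidx k l n i) mod ?Q
        = ((?Q-1-i)*?d mod ?Q + ?d + (i*?d) mod ?Q) mod ?Q" by (simp only: a b)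
    also have "\<dots> = ((?Q-1-i)*?d + i*?d + ?d) mod ?Q" by (rule modl1)
    also have "\<dots> = (?Q*?d) mod ?Q" by (simp only: c)
    also have "\<dots> = 0" by simp
    finally show ?thesis .
  qed
  have Jpair: "(jidx k l n (qq k l n - i) + jidx k l n i) mod qq k l n = 0"
    if "1 \<le> i" "i < qq k l n" for i
  proof -
    let ?Q = "qq k l n" and ?d = "jidx k l n 1"
    have a: "jidx k l n (?Q-i) = (?Q-i)*?d mod ?Q" by (rule JF)
    have b: "jidx k l n i = i*?d mod ?Q" by (rule JF)
    have h: "(?Q-i) + i = ?Q" using that by arith
    have "?Q*?d = ((?Q-i) + i)*?d" by (simp only: h)
    also have "\<dots> = (?Q-i)*?d + i*?d" by (rule distrib_right)
    finally have c: "?Q*?d = (?Q-i)*?d + i*?d" .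
    have "(jidx k l n (?Q - i) + jidx k l n i) mod ?Q
        = ((?Q-i)*?d mod ?Q + (i*?d) mod ?Q) mod ?Q" by (simp only: a b)
    also have "\<dots> = ((?Q-i)*?d + i*?d) mod ?Q" by (rule modl2)
    also have "\<dots> = (?Q*?d) mod ?Q" by (simp only: c)
    also have "\<dots> = 0" by simp
    finally show ?thesis .
  qed
  have K2: "k n \<ge> 2" and L2: "l n \<ge> 2" using k2 l2 by auto
  have OC: "\<And>j. occs k l n j = {(i*k n+j)*(l n*qq k l n) + (qq k l n - jidx k l n i) + t*qq k l n | i t. i < qq k l n \<and> t < l n - 1}"
    unfolding occs_def occ_start_def by (rule refl)
  have RO: "\<And>j. rev_occs k l n (jidx k l n 1) j = {jidx k l n 1 + k n*l n*(qq k l n)^2 - s - qq k l n | s. s \<in> occs k l n j}"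
    unfolding rev_occs_def qq.simps(2) by (rule refl)
  have BD: "rev_boundary k l n (jidx k l n 1) = {x. jidx k l n 1 \<le> x \<and> x < k n*l n*(qq k l n)^2 + jidx k l n 1 \<and> (\<forall>j<k n. \<forall>r\<in>rev_occs k l n (jidx k l n 1) j. \<not> (r \<le> x \<and> x < r + qq k l n))}"
    unfolding rev_boundary_def qq.simps(2) by (rule refl)
  show ?thesis
    by (rule core[of "qq k l n" "k n" "l n" "jidx k l n 1" "jidx k l n" "occs k l n"
        "rev_occs k l n (jidx k l n 1)" "rev_boundary k l n (jidx k l n 1)", OF Q1 K2 L2 dQ Jlt J0 Jsum Jpair OC RO BD])
qed

end
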